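(* Consider the NWLA-CuSum stopping time $\overline{\tau}(b)$ with window size $w$ as defined in the context. For any $w>0$ and any $b>0$, $\mathbb{E}_\infty[\overline{\tau}(b)]\ge e^b$. Consequently, $\overline{\tau}(\overline{b}_\alpha)\in\mathcal{C}_\alpha$ if $\overline{b}_\alpha=|\log\alpha|$.
   Context: Let $X_1,X_2,\dots\in\mathbb{R}^d$ be independent with an unknown change-point $\nu$: before $\nu$ the density is the known $p_0$, from $\nu$ on it is $p_1$ (w.r.t. a dominating measure $\mu$). $\mathbb{P}_\infty,\mathbb{E}_\infty$ denote probability/expectation when no change occurs (all observations have density $p_0$). $\mathcal{C}_\alpha:=\{\tau:1/\mathbb{E}_\infty[\tau]\le\alpha\}$. A fixed density estimation procedure maps a finite collection of observations to a density w.r.t. $\mu$; for a positive integer $w$ and $n>w$, $\widehat{p}^w_n$ is its output on $X_{n-w},\dots,X_{n-1}$. Let $\widehat{Z}^w_n:=\log(\widehat{p}^w_n(X_n)/p_0(X_n))$ for $n>w$; the NWLA-CuSum statistic is $\overline{W}(1)=\dots=\overline{W}(w)=0$, $\overline{W}(n)=(\overline{W}(n-1))^++\widehat{Z}^w_n$ for $n>w$, and $\overline{\tau}(b):=\inf\{n>w:\overline{W}(n)\ge b\}$. *)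

theory Defs
  imports "HOL-Probability.Probability"
begin

definition llr :: "real \<Rightarrow> real \<Rightarrow> ereal" where
  "llr q p = (if q \<le> 0 then -\<infinity> else if p \<le> 0 then \<infinity> else ereal (ln (q / p)))"

fun cusum :: "nat \<Rightarrow> (nat \<Rightarrow> ereal) \<Rightarrow> nat \<Rightarrow> ereal" where
  "cusum w Z 0 = 0"
| "cusum w Z (Suc n) = (if Suc n \<le> w then 0 else max (cusum w Z n) 0 + Z (Suc n))"

definition nwla_Z :: "nat \<Rightarrow> ('a list \<Rightarrow> 'a \<Rightarrow> real) \<Rightarrow> ('a \<Rightarrow> real)
    \<Rightarrow> (nat \<Rightarrow> 'w \<Rightarrow> 'a) \<Rightarrow> 'w \<Rightarrow> nat \<Rightarrow> ereal" where
  "nwla_Z w est p0 X \<omega> n = llr (est (map (\<lambda>i. X i \<omega>) [n - w..<n]) (X n \<omega>)) (p0 (X n \<omega>))"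

definition nwla_W :: "nat \<Rightarrow> ('a list \<Rightarrow> 'a \<Rightarrow> real) \<Rightarrow> ('a \<Rightarrow> real)
    \<Rightarrow> (nat \<Rightarrow> 'w \<Rightarrow> 'a) \<Rightarrow> 'w \<Rightarrow> nat \<Rightarrow> ereal" where
  "nwla_W w est p0 X \<omega> = cusum w (nwla_Z w est p0 X \<omega>)"

definition nwla_tau :: "nat \<Rightarrow> ('a list \<Rightarrow> 'a \<Rightarrow> real) \<Rightarrow> ('a \<Rightarrow> real)
    \<Rightarrow> (nat \<Rightarrow> 'w \<Rightarrow> 'a) \<Rightarrow> real \<Rightarrow> 'w \<Rightarrow> enat" where
  "nwla_tau w est p0 X b \<omega> = (INF n \<in> {n. w < n \<and> ereal b \<le> nwla_W w est p0 X \<omega> n}. enat n)"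

end

theory Submission imports Defs begin

definition lam :: "real \<Rightarrow> real \<Rightarrow> ennreal" where
  "lam q p = (if q \<le> 0 then 0 else if p \<le> 0 then \<infinity> else ennreal (q / p))"

definition ex :: "ereal \<Rightarrow> ennreal" where
  "ex x = (if x = \<infinity> then \<infinity> else if x = -\<infinity> then 0 else ennreal (exp (real_of_ereal x)))"

lemma ex_ereal[simp]: "ex (ereal r) = ennreal (exp r)" by (simp add: ex_def)
lemma ex_inf[simp]: "ex \<infinity> = \<infinity>" by (simp add: ex_def)
lemma ex_minf[simp]: "ex (-\<infinity>) = 0" by (simp add: ex_def)

lemma ex_mono: "a \<le> c \<Longrightarrow> ex a \<le> ex c"
  by (cases a; cases c) auto

lemma ex_llr: "ex (llr q p) = lam q p"
  by (auto simp: llr_def lam_def)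

lemma ex_add: "0 \<le> r \<Longrightarrow> ex (ereal r + z) = ennreal (exp r) * ex z"
  by (cases z) (auto simp: exp_add ennreal_mult)


definition Zp :: "nat \<Rightarrow> ('a list \<Rightarrow> 'a \<Rightarrow> real) \<Rightarrow> ('a \<Rightarrow> real) \<Rightarrow> (nat \<Rightarrow> 'a) \<Rightarrow> nat \<Rightarrow> ereal" where
  "Zp w est p0 v n = llr (est (map v [n - w..<n]) (v n)) (p0 (v n))"

definition Lp :: "nat \<Rightarrow> ('a list \<Rightarrow> 'a \<Rightarrow> real) \<Rightarrow> ('a \<Rightarrow> real) \<Rightarrow> (nat \<Rightarrow> 'a) \<Rightarrow> nat \<Rightarrow> ennreal" where
  "Lp w est p0 v n = lam (est (map v [n - w..<n]) (v n)) (p0 (v n))"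

definition Wp where "Wp w est p0 v = cusum w (Zp w est p0 v)"

definition Ap where "Ap w est p0 b n v = (\<forall>k. w < k \<and> k \<le> n \<longrightarrow> Wp w est p0 v k < ereal b)"

fun Up :: "nat \<Rightarrow> ('a list \<Rightarrow> 'a \<Rightarrow> real) \<Rightarrow> ('a \<Rightarrow> real) \<Rightarrow> real \<Rightarrow> nat \<Rightarrow> (nat \<Rightarrow> 'a) \<Rightarrow> ennreal" where
  "Up w est p0 b 0 v = 0"
| "Up w est p0 b (Suc n) v = (if Suc n \<le> w then 0 else if Ap w est p0 b n v then
     (if Up w est p0 b n v = \<infinity> then \<infinity> else (1 + Up w est p0 b n v) * Lp w est p0 v (Suc n))
     else Up w est p0 b n v)"

lemma ex_Zp: "ex (Zp w est p0 v n) = Lp w est p0 v n"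
  by (simp add: Zp_def Lp_def ex_llr)

lemma cusum_le: "k \<le> w \<Longrightarrow> cusum w Z k = 0"
  by (cases k) auto

lemma Up_le: "k \<le> w \<Longrightarrow> Up w est p0 b k v = 0"
  by (cases k) auto

lemma Ap_Suc: "Ap w est p0 b (Suc n) v \<longleftrightarrow> Ap w est p0 b n v \<and> (w < Suc n \<longrightarrow> Wp w est p0 v (Suc n) < ereal b)"
  unfolding Ap_def using le_Suc_eq by auto

lemma Ap_mono: "m \<le> n \<Longrightarrow> Ap w est p0 b n v \<Longrightarrow> Ap w est p0 b m v"
  unfolding Ap_def by auto

lemma Ap_le: "n \<le> w \<Longrightarrow> Ap w est p0 b n v"
  unfolding Ap_def by auto

lemma invariant:
  assumes "w \<le> n"
  shows "(Ap w est p0 b n v \<longrightarrow> ex (max (Wp w est p0 v n) 0) \<le> 1 + Up w est p0 b n v)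
       \<and> (\<not> Ap w est p0 b n v \<longrightarrow> ennreal (exp b) \<le> Up w est p0 b n v)"
  using assms
proof (induction n rule: dec_induct)
  case base
  then show ?case by (simp add: Ap_le Wp_def cusum_le Up_le zero_ereal_def)
next
  case (step n)
  let ?W = "Wp w est p0 v n" and ?U = "Up w est p0 b n v" and ?L = "Lp w est p0 v (Suc n)"
  let ?W' = "Wp w est p0 v (Suc n)" and ?U' = "Up w est p0 b (Suc n) v"
  have W': "?W' = max ?W 0 + Zp w est p0 v (Suc n)"
    using step(1) by (simp add: Wp_def)
  show ?case
  proof (cases "Ap w est p0 b n v")
    case True
    have IH: "ex (max ?W 0) \<le> 1 + ?U" using step True by auto
    have U': "?U' = (if ?U = \<infinity> then \<infinity> else (1 + ?U) * ?L)" using step(1) True by simp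
    have key: "ex ?W' \<le> ?U'"
    proof (cases "?U = \<infinity>")
      case True then show ?thesis using U' by simp
    next
      case False
      have "max ?W 0 \<noteq> \<infinity>"
      proof
        assume "max ?W 0 = \<infinity>"
        then have "(\<infinity>::ennreal) \<le> 1 + ?U" using IH by simp
        then show False using False by (simp add: top_unique)
      qed
      moreover have "max ?W 0 \<ge> 0" by simp
      ultimately obtain r where r: "max ?W 0 = ereal r" "0 \<le> r"
        by (cases "max ?W 0") auto
      have "ex ?W' = ennreal (exp r) * ?L" using W' r ex_add[of r] ex_Zp by metis
      also have "\<dots> \<le> (1 + ?U) * ?L" using IH r by (intro mult_right_mono) auto
      finally show ?thesis using U' False by simp
    qed
    show ?thesis
    proof (cases "Ap w est p0 b (Suc n) v")
      case True
      have "ex (max ?W' 0) \<le> 1 + ?U'"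
      proof (cases "?W' \<le> 0")
        case True then have "max ?W' 0 = 0" by simp
        then show ?thesis by (simp add: zero_ereal_def)
      next
        case False then have "max ?W' 0 = ?W'" by simp
        then show ?thesis using key by (metis add.commute add_increasing order_refl zero_le)
      qed
      then show ?thesis using True by simp
    next
      case False
      then have "ereal b \<le> ?W'" using True Ap_Suc by (metis not_less)
      then have "ennreal (exp b) \<le> ex ?W'" using ex_mono ex_ereal by metis
      then show ?thesis using key False by (meson order_trans)
    qed
  next
    case False
    then have "\<not> Ap w est p0 b (Suc n) v" using Ap_Suc by blast
    moreover have "?U' = ?U" using False step(1) by simp
    ultimately show ?thesis using step False by simp
  qed
qed


lemma map_shift: "w \<le> k \<Longrightarrow> map v [k - w..<k] = map (\<lambda>j. v (k - w + j)) [0..<w]"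
  by (rule nth_equalityI) auto

lemma locality:
  assumes "0 < w" "\<And>i. i \<in> {1..n} \<Longrightarrow> v i = v' i"
  shows "\<forall>k\<le>n. Wp w est p0 v k = Wp w est p0 v' k \<and> Ap w est p0 b k v = Ap w est p0 b k v'
     \<and> Up w est p0 b k v = Up w est p0 b k v' \<and> (w < k \<longrightarrow> Lp w est p0 v k = Lp w est p0 v' k)"
proof (intro allI impI)
  fix k assume "k \<le> n"
  then show "Wp w est p0 v k = Wp w est p0 v' k \<and> Ap w est p0 b k v = Ap w est p0 b k v'
     \<and> Up w est p0 b k v = Up w est p0 b k v' \<and> (w < k \<longrightarrow> Lp w est p0 v k = Lp w est p0 v' k)"
  proof (induction k)
    case 0
    then show ?case by (simp add: Wp_def Ap_def)
  next
    case (Suc k)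
    have IH: "Wp w est p0 v k = Wp w est p0 v' k" "Ap w est p0 b k v = Ap w est p0 b k v'"
       "Up w est p0 b k v = Up w est p0 b k v'" using Suc by auto
    show ?case
    proof (cases "w < Suc k")
      case False
      then show ?thesis using IH by (simp add: Ap_Suc Wp_def)
    next
      case True
      have m: "map v [Suc k - w..<Suc k] = map v' [Suc k - w..<Suc k]"
        using assms Suc.prems True by (intro map_cong) auto
      have vk: "v (Suc k) = v' (Suc k)" using assms Suc.prems by auto
      have Z: "Zp w est p0 v (Suc k) = Zp w est p0 v' (Suc k)" unfolding Zp_def m vk ..
      have L: "Lp w est p0 v (Suc k) = Lp w est p0 v' (Suc k)" unfolding Lp_def m vk ..
      have W: "Wp w est p0 v (Suc k) = Wp w est p0 v' (Suc k)"
        using IH(1) Z by (simp add: Wp_def)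
      show ?thesis using W L IH by (simp add: Ap_Suc)
    qed
  qed
qed


locale meas_setup =
  fixes \<mu> :: "'a measure" and p0 :: "'a \<Rightarrow> real" and est :: "'a list \<Rightarrow> 'a \<Rightarrow> real" and w :: nat
  assumes p0_meas: "p0 \<in> borel_measurable \<mu>"
    and est_meas: "\<And>k. (\<lambda>(v, x). est (map v [0..<k]) x)
                     \<in> borel_measurable (PiM {..<k} (\<lambda>_. \<mu>) \<Otimes>\<^sub>M \<mu>)"
    and wpos: "0 < w"
begin

lemma est_comp:
  assumes f: "\<And>j. j < w \<Longrightarrow> (\<lambda>\<omega>. f j \<omega>) \<in> measurable N \<mu>" and x: "x \<in> measurable N \<mu>"
  shows "(\<lambda>\<omega>. est (map (\<lambda>j. f j \<omega>) [0..<w]) (x \<omega>)) \<in> borel_measurable N"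
proof -
  have 1: "(\<lambda>\<omega>. (restrict (\<lambda>j. f j \<omega>) {..<w}, x \<omega>)) \<in> measurable N (PiM {..<w} (\<lambda>_. \<mu>) \<Otimes>\<^sub>M \<mu>)"
    using f x by (intro measurable_Pair measurable_restrict) auto
  have 2: "(\<lambda>\<omega>. (\<lambda>(v, x). est (map v [0..<w]) x) (restrict (\<lambda>j. f j \<omega>) {..<w}, x \<omega>)) \<in> borel_measurable N"
    by (rule measurable_compose[OF 1 est_meas])
  have 3: "map (restrict (\<lambda>j. f j \<omega>) {..<w}) [0..<w] = map (\<lambda>j. f j \<omega>) [0..<w]" for \<omega>
    by (intro map_cong) auto
  show ?thesis using 2 by (simp add: 3)
qed

lemma lam_meas[measurable]:
  assumes [measurable]: "f \<in> borel_measurable N" "g \<in> borel_measurable N"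
  shows "(\<lambda>x. lam (f x) (g x)) \<in> borel_measurable N"
  unfolding lam_def by measurable

lemma llr_meas[measurable]:
  assumes [measurable]: "f \<in> borel_measurable N" "g \<in> borel_measurable N"
  shows "(\<lambda>x. llr (f x) (g x)) \<in> borel_measurable N"
  unfolding llr_def by measurable

lemma comp_meas:
  assumes "\<And>i. i \<in> {k - w..k} \<Longrightarrow> (\<lambda>\<omega>. V \<omega> i) \<in> measurable N \<mu>" "w < k"
  shows "(\<lambda>\<omega>. Zp w est p0 (V \<omega>) k) \<in> borel_measurable N"
    and "(\<lambda>\<omega>. Lp w est p0 (V \<omega>) k) \<in> borel_measurable N"
proof -
  have e: "(\<lambda>\<omega>. est (map (V \<omega>) [k - w..<k]) (V \<omega> k)) \<in> borel_measurable N"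
  proof -
    have "(\<lambda>\<omega>. est (map (\<lambda>j. V \<omega> (k - w + j)) [0..<w]) (V \<omega> k)) \<in> borel_measurable N"
      using assms by (intro est_comp assms(1)) auto
    then show ?thesis using assms(2) by (simp add: map_shift)
  qed
  have p: "(\<lambda>\<omega>. p0 (V \<omega> k)) \<in> borel_measurable N"
    using assms by (intro measurable_compose[OF _ p0_meas]) auto
  show "(\<lambda>\<omega>. Zp w est p0 (V \<omega>) k) \<in> borel_measurable N"
    unfolding Zp_def using e p by measurable
  show "(\<lambda>\<omega>. Lp w est p0 (V \<omega>) k) \<in> borel_measurable N"
    unfolding Lp_def using e p by measurable
qed

lemma path_meas:
  assumes V: "\<And>i. i \<in> {1..n} \<Longrightarrow> (\<lambda>\<omega>. V \<omega> i) \<in> measurable N \<mu>" and "m \<le> n"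
  shows "(\<lambda>\<omega>. Wp w est p0 (V \<omega>) m) \<in> borel_measurable N \<and>
         Measurable.pred N (\<lambda>\<omega>. Ap w est p0 b m (V \<omega>)) \<and>
         (\<lambda>\<omega>. Up w est p0 b m (V \<omega>)) \<in> borel_measurable N"
  using assms(2)
proof (induction m)
  case 0
  then show ?case by (simp add: Wp_def Ap_def)
next
  case (Suc m)
  then have IH: "(\<lambda>\<omega>. Wp w est p0 (V \<omega>) m) \<in> borel_measurable N"
     "Measurable.pred N (\<lambda>\<omega>. Ap w est p0 b m (V \<omega>))"
     "(\<lambda>\<omega>. Up w est p0 b m (V \<omega>)) \<in> borel_measurable N" by auto
  show ?case
  proof (cases "w < Suc m")
    case False
    then show ?thesis using IH by (simp add: Ap_Suc Wp_def Up_le)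
  next
    case True
    have V': "\<And>i. i \<in> {Suc m - w..Suc m} \<Longrightarrow> (\<lambda>\<omega>. V \<omega> i) \<in> measurable N \<mu>"
      using Suc.prems wpos True by (intro V) auto
    note ZL = comp_meas[OF V' True]
    have W: "(\<lambda>\<omega>. Wp w est p0 (V \<omega>) (Suc m)) \<in> borel_measurable N"
      using True IH ZL by (simp add: Wp_def)
    have A: "Measurable.pred N (\<lambda>\<omega>. Ap w est p0 b (Suc m) (V \<omega>))"
      unfolding Ap_Suc using IH W by measurable
    have U: "(\<lambda>\<omega>. Up w est p0 b (Suc m) (V \<omega>)) \<in> borel_measurable N"
      using True IH ZL by simp
    show ?thesis using W A U by blast
  qed
qed

end

locale nwla = prob_space M + meas_setup \<mu> p0 est w
  for M :: "'w measure" and \<mu> :: "'a measure" and p0 est w +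
  fixes X :: "nat \<Rightarrow> 'w \<Rightarrow> 'a"
  assumes indep: "indep_vars (\<lambda>_. \<mu>) X {1..}"
    and distrX: "\<And>n. 1 \<le> n \<Longrightarrow> distr M \<mu> (X n) = density \<mu> (\<lambda>x. ennreal (p0 x))"
    and p0_nonneg: "\<And>x. x \<in> space \<mu> \<Longrightarrow> 0 \<le> p0 x"
    and est_nonneg: "\<And>xs x. x \<in> space \<mu> \<Longrightarrow> 0 \<le> est xs x"
    and est_int: "\<And>xs. (\<integral>\<^sup>+ x. ennreal (est xs x) \<partial>\<mu>) = 1"
begin

definition "pth \<omega> = (\<lambda>i. X i \<omega>)"
definition "Y n \<omega> = restrict (\<lambda>i. X i \<omega>) {1..n}"

lemma Xmeas: "1 \<le> i \<Longrightarrow> X i \<in> measurable M \<mu>"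
  using indep unfolding indep_vars_def2 by auto

lemma Ymeas: "Y n \<in> measurable M (PiM {1..n} (\<lambda>_. \<mu>))"
  unfolding Y_def by (intro measurable_restrict Xmeas) auto

lemma inner_bound:
  assumes "z \<in> space \<mu>"
  shows "ennreal (p0 z) * lam q (p0 z) \<le> ennreal q"
  using p0_nonneg[OF assms] by (auto simp: lam_def ennreal_mult''[symmetric] ennreal_mult[symmetric])

lemma key:
  assumes n: "w \<le> n" and h: "h \<in> borel_measurable (PiM {1..n} (\<lambda>_. \<mu>))"
  shows "(\<integral>\<^sup>+ \<omega>. h (Y n \<omega>) * Lp w est p0 (pth \<omega>) (Suc n) \<partial>M) \<le> (\<integral>\<^sup>+ \<omega>. h (Y n \<omega>) \<partial>M)"
proof -
  let ?P = "PiM {1..n} (\<lambda>_. \<mu>)"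
  define g where "g = (\<lambda>(u, z). lam (est (map u [Suc n - w..<Suc n]) z) (p0 z))"
  define D1 where "D1 = distr M ?P (Y n)"
  define D2 where "D2 = distr M \<mu> (X (Suc n))"
  have D2: "D2 = density \<mu> (\<lambda>x. ennreal (p0 x))" unfolding D2_def by (rule distrX) simp
  interpret D2: prob_space D2 unfolding D2_def by (intro prob_space_distr Xmeas) simp
  have gmeas: "g \<in> borel_measurable (?P \<Otimes>\<^sub>M \<mu>)"
  proof -
    have "(\<lambda>uz. Lp w est p0 ((fst uz)(Suc n := snd uz)) (Suc n)) \<in> borel_measurable (?P \<Otimes>\<^sub>M \<mu>)"
    proof (rule comp_meas(2))
      fix i assume i: "i \<in> {Suc n - w..Suc n}"
      show "(\<lambda>uz. ((fst uz)(Suc n := snd uz)) i) \<in> measurable (?P \<Otimes>\<^sub>M \<mu>) \<mu>"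
      proof (cases "i = Suc n")
        case True then show ?thesis by simp
      next
        case False
        then have "i \<in> {1..n}" using i n wpos by auto
        then show ?thesis using False
          by (simp add: measurable_compose[OF measurable_fst measurable_component_singleton])
      qed
    qed (use n in auto)
    moreover have "Lp w est p0 ((fst uz)(Suc n := snd uz)) (Suc n) = g uz" for uz
    proof -
      have "map ((fst uz)(Suc n := snd uz)) [Suc n - w..<Suc n] = map (fst uz) [Suc n - w..<Suc n]"
        by (intro map_cong) auto
      then show ?thesis by (simp add: Lp_def g_def split: prod.splits)
    qed
    ultimately show ?thesis by simp
  qed
  have Lg: "Lp w est p0 (pth \<omega>) (Suc n) = g (Y n \<omega>, X (Suc n) \<omega>)" for \<omega>
  proof -
    have "map (pth \<omega>) [Suc n - w..<Suc n] = map (Y n \<omega>) [Suc n - w..<Suc n]"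
      using n wpos by (intro map_cong) (auto simp: pth_def Y_def)
    note m = this
    show ?thesis unfolding Lp_def g_def prod.case m by (simp add: pth_def)
  qed
  let ?Q = "PiM {Suc n} (\<lambda>_. \<mu>)"
  define Y' where "Y' \<omega> = restrict (\<lambda>i. X i \<omega>) {Suc n}" for \<omega>
  have Y'meas: "Y' \<in> measurable M ?Q"
    unfolding Y'_def by (intro measurable_restrict Xmeas) auto
  have ind: "indep_var ?P (Y n) ?Q Y'"
    unfolding Y_def Y'_def by (rule indep_var_restrict[OF indep]) auto
  define D2' where "D2' = distr M ?Q Y'"
  interpret D2': prob_space D2' unfolding D2'_def by (intro prob_space_distr Y'meas)
  have pair: "D1 \<Otimes>\<^sub>M D2' = distr M (?P \<Otimes>\<^sub>M ?Q) (\<lambda>\<omega>. (Y n \<omega>, Y' \<omega>))"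
    using ind unfolding D1_def D2'_def indep_var_distribution_eq by blast
  have comp1: "(\<lambda>z::nat \<Rightarrow> 'a. z (Suc n)) \<in> measurable ?Q \<mu>"
    by (rule measurable_component_singleton) simp
  have F: "(\<lambda>(u, z). h u * g (u, z (Suc n))) \<in> borel_measurable (?P \<Otimes>\<^sub>M ?Q)"
  proof -
    have "(\<lambda>uz. (fst uz, (snd uz) (Suc n))) \<in> measurable (?P \<Otimes>\<^sub>M ?Q) (?P \<Otimes>\<^sub>M \<mu>)"
      by (intro measurable_Pair measurable_fst measurable_compose[OF measurable_snd comp1])
    from measurable_compose[OF this gmeas] have "(\<lambda>uz. g (fst uz, (snd uz) (Suc n))) \<in> borel_measurable (?P \<Otimes>\<^sub>M ?Q)" .
    moreover have "(\<lambda>uz. h (fst uz)) \<in> borel_measurable (?P \<Otimes>\<^sub>M ?Q)"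
      using h by measurable
    ultimately have "(\<lambda>uz. h (fst uz) * g (fst uz, (snd uz) (Suc n))) \<in> borel_measurable (?P \<Otimes>\<^sub>M ?Q)"
      by measurable
    then show ?thesis by (simp add: case_prod_beta')
  qed
  have "(\<integral>\<^sup>+ \<omega>. h (Y n \<omega>) * Lp w est p0 (pth \<omega>) (Suc n) \<partial>M)
      = (\<integral>\<^sup>+ \<omega>. (\<lambda>(u, z). h u * g (u, z (Suc n))) (Y n \<omega>, Y' \<omega>) \<partial>M)"
    by (simp add: Lg Y'_def)
  also have "\<dots> = integral\<^sup>N (distr M (?P \<Otimes>\<^sub>M ?Q) (\<lambda>\<omega>. (Y n \<omega>, Y' \<omega>))) (\<lambda>(u, z). h u * g (u, z (Suc n)))"
    by (rule nn_integral_distr[symmetric]) (fact measurable_Pair[OF Ymeas Y'meas], subst measurable_distr_eq1, fact F)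
  also have "\<dots> = integral\<^sup>N (D1 \<Otimes>\<^sub>M D2') (\<lambda>(u, z). h u * g (u, z (Suc n)))"
    by (simp add: pair)
  also have "\<dots> = (\<integral>\<^sup>+ u. \<integral>\<^sup>+ z. h u * g (u, z (Suc n)) \<partial>D2' \<partial>D1)"
  proof -
    have "sets (D1 \<Otimes>\<^sub>M D2') = sets (?P \<Otimes>\<^sub>M ?Q)"
      unfolding D1_def D2'_def by (intro sets_pair_measure_cong sets_distr)
    then have "(\<lambda>(u, z). h u * g (u, z (Suc n))) \<in> borel_measurable (D1 \<Otimes>\<^sub>M D2')"
      using F measurable_cong_sets by blast
    from D2'.nn_integral_fst[OF this] show ?thesis by simp
  qed
  also have "\<dots> \<le> (\<integral>\<^sup>+ u. h u \<partial>D1)"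
  proof (rule nn_integral_mono)
    fix u assume u: "u \<in> space D1"
    then have u': "u \<in> space ?P" by (simp add: D1_def)
    have gu: "(\<lambda>z. g (u, z)) \<in> borel_measurable \<mu>"
      using gmeas u' by measurable
    have "(\<integral>\<^sup>+ z. h u * g (u, z (Suc n)) \<partial>D2') = h u * (\<integral>\<^sup>+ z. g (u, z (Suc n)) \<partial>D2')"
      by (rule nn_integral_cmult) (simp add: D2'_def measurable_compose[OF comp1 gu])
    also have "(\<integral>\<^sup>+ z. g (u, z (Suc n)) \<partial>D2') = (\<integral>\<^sup>+ \<omega>. g (u, Y' \<omega> (Suc n)) \<partial>M)"
      unfolding D2'_def by (rule nn_integral_distr) (use Y'meas measurable_compose[OF comp1 gu] in auto)
    also have "\<dots> = (\<integral>\<^sup>+ \<omega>. g (u, X (Suc n) \<omega>) \<partial>M)" by (simp add: Y'_def)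
    also have "\<dots> = (\<integral>\<^sup>+ z. g (u, z) \<partial>D2)"
      unfolding D2_def by (rule nn_integral_distr[symmetric]) (use Xmeas gu in auto)
    also have "\<dots> = (\<integral>\<^sup>+ z. ennreal (p0 z) * g (u, z) \<partial>\<mu>)"
      unfolding D2 by (rule nn_integral_density) (use p0_meas gu in auto)
    also have "\<dots> \<le> (\<integral>\<^sup>+ z. ennreal (est (map u [Suc n - w..<Suc n]) z) \<partial>\<mu>)"
      by (rule nn_integral_mono) (simp add: g_def inner_bound)
    also have "\<dots> = 1" by (rule est_int)
    finally show "(\<integral>\<^sup>+ z. h u * g (u, z (Suc n)) \<partial>D2') \<le> h u"
      by (metis mult.right_neutral mult_left_mono zero_le)
  qed
  also have "\<dots> = (\<integral>\<^sup>+ \<omega>. h (Y n \<omega>) \<partial>M)"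
    unfolding D1_def by (rule nn_integral_distr) (use Ymeas h in auto)
  finally show ?thesis .
qed

end

lemma sum_ind_le:
  assumes mono: "\<And>m n. m \<le> n \<Longrightarrow> P n \<Longrightarrow> P m" and bd: "\<And>m. P m \<Longrightarrow> enat (Suc m) \<le> t"
  shows "(\<Sum>m<N. if P m then 1 else 0 :: ennreal) \<le> ennreal_of_enat t"
proof (induction N)
  case 0 then show ?case by simp
next
  case (Suc N)
  show ?case
  proof (cases "P N")
    case True
    then have "(\<Sum>m<Suc N. if P m then 1 else 0 :: ennreal) = (\<Sum>m<Suc N. 1)"
      using mono[of _ N] True by (intro sum.cong) (auto simp: less_Suc_eq_le)
    also have "\<dots> = ennreal_of_enat (enat (Suc N))" by simp
    also have "\<dots> \<le> ennreal_of_enat t" using bd[OF True] ennreal_of_enat_le_iff by blast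
    finally show ?thesis .
  next
    case False then show ?thesis using Suc by simp
  qed
qed

lemma tau_bound:
  assumes "Ap w est p0 b m (\<lambda>i. X i \<omega>)"
  shows "enat (Suc m) \<le> nwla_tau w est p0 X b \<omega>"
proof -
  have W: "nwla_W w est p0 X \<omega> = Wp w est p0 (\<lambda>i. X i \<omega>)"
    unfolding nwla_W_def Wp_def
    by (rule arg_cong[where f="cusum w"]) (simp add: fun_eq_iff nwla_Z_def Zp_def)
  show ?thesis unfolding nwla_tau_def
  proof (rule INF_greatest)
    fix n assume "n \<in> {n. w < n \<and> ereal b \<le> nwla_W w est p0 X \<omega> n}"
    then have n: "w < n" "ereal b \<le> Wp w est p0 (\<lambda>i. X i \<omega>) n" using W by auto
    have "\<not> n \<le> m"
    proof
      assume "n \<le> m"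
      then have "Wp w est p0 (\<lambda>i. X i \<omega>) n < ereal b" using assms n(1) unfolding Ap_def by auto
      then show False using n(2) by simp
    qed
    then show "enat (Suc m) \<le> enat n" by simp
  qed
qed

context nwla
begin

lemma pth_meas:
  "(\<lambda>\<omega>. Up w est p0 b m (pth \<omega>)) \<in> borel_measurable M"
  "Measurable.pred M (\<lambda>\<omega>. Ap w est p0 b m (pth \<omega>))"
  using path_meas[of m pth M m b] Xmeas by (auto simp: pth_def)

lemma P_meas:
  "(\<lambda>u. Up w est p0 b m u) \<in> borel_measurable (PiM {1..m} (\<lambda>_. \<mu>))"
  "Measurable.pred (PiM {1..m} (\<lambda>_. \<mu>)) (\<lambda>u. Ap w est p0 b m u)"
  using path_meas[of m "\<lambda>u. u" "PiM {1..m} (\<lambda>_. \<mu>)" m b] measurable_component_singleton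
  by auto

lemma loc:
  assumes "m \<le> n"
  shows "Up w est p0 b m (pth \<omega>) = Up w est p0 b m (Y n \<omega>)"
    "Ap w est p0 b m (pth \<omega>) = Ap w est p0 b m (Y n \<omega>)"
  using locality[OF wpos, of n "pth \<omega>" "Y n \<omega>" est p0 b] assms by (auto simp: pth_def Y_def)

lemma L_meas:
  assumes "w < k"
  shows "(\<lambda>\<omega>. Lp w est p0 (pth \<omega>) k) \<in> borel_measurable M"
  using assms wpos by (intro comp_meas(2)) (auto simp: pth_def intro!: Xmeas)

definition "EU b m = (\<integral>\<^sup>+ \<omega>. Up w est p0 b m (pth \<omega>) \<partial>M)"
definition "PA b m = (\<integral>\<^sup>+ \<omega>. (if Ap w est p0 b m (pth \<omega>) then 1 else 0) \<partial>M)"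

lemma EU_step:
  assumes n: "w \<le> n"
  shows "EU b (Suc n) \<le> EU b n + PA b n"
proof -
  let ?P = "PiM {1..n} (\<lambda>_. \<mu>)"
  let ?A = "\<lambda>u. Ap w est p0 b n u" and ?U = "\<lambda>u. Up w est p0 b n u"
  define r where "r u = (if ?A u then (if ?U u = \<infinity> then \<infinity> else 0) else ?U u)" for u
  define hh where "hh u = (if ?A u \<and> ?U u \<noteq> \<infinity> then 1 + ?U u else 0)" for u
  note PM = P_meas[where m=n and b=b]
  have rm: "r \<in> borel_measurable ?P" unfolding r_def using PM by measurable
  have hm: "hh \<in> borel_measurable ?P" unfolding hh_def using PM by measurable
  have rY: "(\<lambda>\<omega>. r (Y n \<omega>)) \<in> borel_measurable M" by (rule measurable_compose[OF Ymeas rm])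
  have hY: "(\<lambda>\<omega>. hh (Y n \<omega>)) \<in> borel_measurable M" by (rule measurable_compose[OF Ymeas hm])
  have Lm: "(\<lambda>\<omega>. Lp w est p0 (pth \<omega>) (Suc n)) \<in> borel_measurable M" using n by (intro L_meas) auto
  have pw: "Up w est p0 b (Suc n) (pth \<omega>) = r (Y n \<omega>) + hh (Y n \<omega>) * Lp w est p0 (pth \<omega>) (Suc n)" for \<omega>
    using n by (auto simp: r_def hh_def loc[of n n])
  have pw2: "r u + hh u = ?U u + (if ?A u then 1 else 0)" for u
    by (auto simp: r_def hh_def add.commute)
  have "EU b (Suc n) = (\<integral>\<^sup>+ \<omega>. r (Y n \<omega>) \<partial>M) + (\<integral>\<^sup>+ \<omega>. hh (Y n \<omega>) * Lp w est p0 (pth \<omega>) (Suc n) \<partial>M)"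
    unfolding EU_def pw using rY hY Lm by (intro nn_integral_add) auto
  also have "\<dots> \<le> (\<integral>\<^sup>+ \<omega>. r (Y n \<omega>) \<partial>M) + (\<integral>\<^sup>+ \<omega>. hh (Y n \<omega>) \<partial>M)"
    by (intro add_left_mono key n hm)
  also have "\<dots> = (\<integral>\<^sup>+ \<omega>. r (Y n \<omega>) + hh (Y n \<omega>) \<partial>M)"
    using rY hY by (intro nn_integral_add[symmetric]) auto
  also have "\<dots> = (\<integral>\<^sup>+ \<omega>. ?U (Y n \<omega>) + (if ?A (Y n \<omega>) then 1 else 0) \<partial>M)"
    by (simp add: pw2)
  also have "\<dots> = (\<integral>\<^sup>+ \<omega>. Up w est p0 b n (pth \<omega>) + (if Ap w est p0 b n (pth \<omega>) then 1 else 0) \<partial>M)"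
    by (simp add: loc[of n n])
  also have "\<dots> = EU b n + PA b n"
    unfolding EU_def PA_def using pth_meas[where m=n and b=b] by (intro nn_integral_add) auto
  finally show ?thesis .
qed

lemma EU_sum:
  assumes "w \<le> N"
  shows "EU b N \<le> (\<Sum>m\<in>{w..<N}. PA b m)"
  using assms
proof (induction N rule: dec_induct)
  case base
  then show ?case by (simp add: EU_def Up_le)
next
  case (step n)
  have "EU b (Suc n) \<le> EU b n + PA b n" by (rule EU_step) fact
  also have "\<dots> \<le> (\<Sum>m\<in>{w..<n}. PA b m) + PA b n" using step by (intro add_right_mono)
  also have "\<dots> = (\<Sum>m\<in>{w..<Suc n}. PA b m)" using step by simp
  finally show ?case .
qed

lemma PA_sum_le:
  "(\<Sum>m<N. PA b m) \<le> (\<integral>\<^sup>+ \<omega>. ennreal_of_enat (nwla_tau w est p0 X b \<omega>) \<partial>M)"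
proof -
  have "(\<Sum>m<N. PA b m) = (\<integral>\<^sup>+ \<omega>. (\<Sum>m<N. if Ap w est p0 b m (pth \<omega>) then 1 else 0) \<partial>M)"
    unfolding PA_def using pth_meas by (intro nn_integral_sum[symmetric]) auto
  also have "\<dots> \<le> (\<integral>\<^sup>+ \<omega>. ennreal_of_enat (nwla_tau w est p0 X b \<omega>) \<partial>M)"
    by (intro nn_integral_mono sum_ind_le[where P="\<lambda>m. Ap w est p0 b m (pth _)"])
       (auto intro: Ap_mono tau_bound simp: pth_def)
  finally show ?thesis .
qed

end

context nwla
begin

lemma PA_mono: "m \<le> N \<Longrightarrow> PA b N \<le> PA b m"
  unfolding PA_def by (intro nn_integral_mono) (auto dest: Ap_mono)

lemma PA_le1: "PA b N \<le> 1"
proof -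
  have "PA b N \<le> (\<integral>\<^sup>+ \<omega>. 1 \<partial>M)" unfolding PA_def by (intro nn_integral_mono) auto
  also have "\<dots> = 1" by (simp add: emeasure_space_1)
  finally show ?thesis .
qed

lemma main_bound:
  "ennreal (exp b) \<le> (\<integral>\<^sup>+ \<omega>. ennreal_of_enat (nwla_tau w est p0 X b \<omega>) \<partial>M)"
proof -
  define T where "T = (\<integral>\<^sup>+ \<omega>. ennreal_of_enat (nwla_tau w est p0 X b \<omega>) \<partial>M)"
  have a: "ennreal (exp b) \<le> EU b N + ennreal (exp b) * PA b N" if N: "w \<le> N" for N
  proof -
    have "ennreal (exp b) = (\<integral>\<^sup>+ \<omega>. ennreal (exp b) \<partial>M)" by (simp add: emeasure_space_1)
    also have "\<dots> \<le> (\<integral>\<^sup>+ \<omega>. Up w est p0 b N (pth \<omega>) + ennreal (exp b) * (if Ap w est p0 b N (pth \<omega>) then 1 else 0) \<partial>M)"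
    proof (rule nn_integral_mono)
      fix \<omega>
      show "ennreal (exp b) \<le> Up w est p0 b N (pth \<omega>) + ennreal (exp b) * (if Ap w est p0 b N (pth \<omega>) then 1 else 0)"
        using invariant[of w N est p0 b "pth \<omega>", OF N] by (cases "Ap w est p0 b N (pth \<omega>)") (auto intro: add_increasing)
    qed
    also have "\<dots> = EU b N + (\<integral>\<^sup>+ \<omega>. ennreal (exp b) * (if Ap w est p0 b N (pth \<omega>) then 1 else 0) \<partial>M)"
      unfolding EU_def using pth_meas[where m=N and b=b] by (intro nn_integral_add) auto
    also have "(\<integral>\<^sup>+ \<omega>. ennreal (exp b) * (if Ap w est p0 b N (pth \<omega>) then 1 else 0) \<partial>M) = ennreal (exp b) * PA b N"
      unfolding PA_def using pth_meas[where m=N and b=b] by (intro nn_integral_cmult) auto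
    finally show ?thesis .
  qed
  have bsum: "(\<Sum>m<N. PA b m) \<le> T" for N unfolding T_def by (rule PA_sum_le)
  have EUT: "EU b N \<le> T" if "w \<le> N" for N
  proof -
    have "EU b N \<le> (\<Sum>m\<in>{w..<N}. PA b m)" by (rule EU_sum) fact
    also have "\<dots> \<le> (\<Sum>m<N. PA b m)" by (intro sum_mono2) auto
    finally show ?thesis using bsum order_trans by blast
  qed
  have c: "of_nat N * PA b N \<le> T" for N
  proof -
    have "of_nat N * PA b N = (\<Sum>m<N. PA b N)" by simp
    also have "\<dots> \<le> (\<Sum>m<N. PA b m)" by (intro sum_mono PA_mono) auto
    finally show ?thesis using bsum order_trans by blast
  qed
  show ?thesis
  proof (cases "T = \<infinity>")
    case True then show ?thesis unfolding T_def by simp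
  next
    case False
    then obtain t where t: "T = ennreal t" "0 \<le> t" by (cases T) auto
    have ineq: "exp b \<le> t + exp b * t / real N" if N: "w \<le> N" "1 \<le> N" for N
    proof -
      obtain p where p: "PA b N = ennreal p" "0 \<le> p" using PA_le1[of b N]
        by (cases "PA b N") (auto simp: top_unique)
      have "ennreal (exp b) \<le> EU b N + ennreal (exp b) * PA b N" by (rule a[OF N(1)])
      also have "\<dots> \<le> ennreal t + ennreal (exp b) * ennreal p"
      proof -
        have "EU b N \<le> ennreal t" using EUT[OF N(1)] t by simp
        then show ?thesis using p(1) by (simp add: add_right_mono)
      qed
      also have "\<dots> = ennreal (t + exp b * p)"
        using t p by (subst ennreal_plus) (auto simp: ennreal_mult)
      finally have "ennreal (exp b) \<le> ennreal (t + exp b * p)" .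
      moreover have pos: "0 \<le> t + exp b * p" using t p by simp
      ultimately have 1: "exp b \<le> t + exp b * p" using ennreal_le_iff[OF pos] by blast
      have "ennreal (real N * p) = of_nat N * PA b N"
        using p by (simp add: ennreal_mult ennreal_of_nat_eq_real_of_nat)
      then have "ennreal (real N * p) \<le> ennreal t" using c[of N] t by simp
      then have 2: "real N * p \<le> t" using ennreal_le_iff[OF t(2)] by blast
      then have "p \<le> t / real N" using N by (simp add: field_simps)
      then have "exp b * p \<le> exp b * t / real N" by (simp add: mult_left_mono[of p "t / real N" "exp b", simplified])
      then show ?thesis using 1 by linarith
    qed
    have "exp b \<le> t"
    proof (rule ccontr)
      assume "\<not> exp b \<le> t"
      then have d: "0 < exp b - t" by simp
      obtain N :: nat where N0: "exp b * t / (exp b - t) < real N" using reals_Archimedean2 by blast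
      define N' where "N' = max N (max w 1)"
      have N': "w \<le> N'" "1 \<le> N'" "exp b * t / (exp b - t) < real N'"
        using N0 unfolding N'_def by auto
      have "exp b * t < real N' * (exp b - t)"
        using N'(3) d by (simp add: pos_divide_less_eq mult.commute)
      moreover have "0 < real N'" using N'(2) by simp
      ultimately have "exp b * t / real N' < exp b - t"
        by (simp add: pos_divide_less_eq mult.commute)
      then show False using ineq[OF N'(1,2)] by linarith
    qed
    then show ?thesis using t unfolding T_def by simp
  qed
qed

end

theorem lemma4:
  fixes M :: "'w measure" and \<mu> :: "'a measure"
    and X :: "nat \<Rightarrow> 'w \<Rightarrow> 'a"
    and p0 :: "'a \<Rightarrow> real" and est :: "'a list \<Rightarrow> 'a \<Rightarrow> real"
    and w :: nat
  assumes "prob_space M"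
    and "sigma_finite_measure \<mu>"
    and p0_meas: "p0 \<in> borel_measurable \<mu>"
    and p0_nonneg: "\<And>x. x \<in> space \<mu> \<Longrightarrow> 0 \<le> p0 x"
    and p0_int: "(\<integral>\<^sup>+ x. ennreal (p0 x) \<partial>\<mu>) = 1"
    and indep: "prob_space.indep_vars M (\<lambda>_. \<mu>) X {1..}"
    and distr: "\<And>n. 1 \<le> n \<Longrightarrow> distr M \<mu> (X n) = density \<mu> (\<lambda>x. ennreal (p0 x))"
    and est_meas: "\<And>k. (\<lambda>(v, x). est (map v [0..<k]) x)
                     \<in> borel_measurable (PiM {..<k} (\<lambda>_. \<mu>) \<Otimes>\<^sub>M \<mu>)"
    and est_nonneg: "\<And>xs x. x \<in> space \<mu> \<Longrightarrow> 0 \<le> est xs x"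
    and est_int: "\<And>xs. (\<integral>\<^sup>+ x. ennreal (est xs x) \<partial>\<mu>) = 1"
    and "0 < w"
  shows "(\<forall>b>0. (\<integral>\<^sup>+ \<omega>. ennreal_of_enat (nwla_tau w est p0 X b \<omega>) \<partial>M) \<ge> ennreal (exp b))
       \<and> (\<forall>\<alpha>. 0 < \<alpha> \<and> \<alpha> < 1 \<longrightarrow>
            1 / (\<integral>\<^sup>+ \<omega>. ennreal_of_enat (nwla_tau w est p0 X \<bar>ln \<alpha>\<bar> \<omega>) \<partial>M) \<le> ennreal \<alpha>)"
proof -
  interpret nwla M \<mu> p0 est w X
    by (rule nwla.intro[OF assms(1) meas_setup.intro nwla_axioms.intro]) (fact assms)+
  have A: "ennreal (exp b) \<le> (\<integral>\<^sup>+ \<omega>. ennreal_of_enat (nwla_tau w est p0 X b \<omega>) \<partial>M)" for b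
    by (rule main_bound)
  have B: "1 / (\<integral>\<^sup>+ \<omega>. ennreal_of_enat (nwla_tau w est p0 X \<bar>ln \<alpha>\<bar> \<omega>) \<partial>M) \<le> ennreal \<alpha>"
    if a: "0 < \<alpha>" "\<alpha> < 1" for \<alpha>
  proof -
    let ?T = "(\<integral>\<^sup>+ \<omega>. ennreal_of_enat (nwla_tau w est p0 X \<bar>ln \<alpha>\<bar> \<omega>) \<partial>M)"
    have e: "exp \<bar>ln \<alpha>\<bar> = 1 / \<alpha>"
    proof -
      have "ln \<alpha> < 0" using a by simp
      then have "\<bar>ln \<alpha>\<bar> = - ln \<alpha>" by simp
      then show ?thesis using a by (simp add: exp_minus inverse_eq_divide)
    qed
    have T: "ennreal (1 / \<alpha>) \<le> ?T" using A[of "\<bar>ln \<alpha>\<bar>"] e by simp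
    have "0 < ennreal (1 / \<alpha>)" using a by simp
    then have "0 < ?T" using T by (rule order_less_le_trans)
    moreover have "1 \<le> ?T * ennreal \<alpha>"
    proof -
      have "(1::ennreal) = ennreal (1 / \<alpha>) * ennreal \<alpha>" using a by (simp add: ennreal_mult[symmetric])
      also have "\<dots> \<le> ?T * ennreal \<alpha>" using T by (intro mult_right_mono) auto
      finally show ?thesis .
    qed
    ultimately show ?thesis by (rule divide_le_posI_ennreal)
  qed
  show ?thesis using A B by auto
qed

end
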